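(* Let $\psi,\varphi$ be metric formulas and $m,n\in\mathbb{N}$ with $0<m<n-1$. Then, with respect to strict timed traces, $$\psi\,\mathsf{U}_{[m,n)}\,\varphi\equiv\psi\wedge\Big(\bigvee_{i=1}^{m}\circ_{[i,i]}\big(\psi\,\mathsf{U}_{[m-i,n-i)}\,\varphi\big)\vee\bigvee_{i=m+1}^{n-1}\circ_{[i,i]}\big(\psi\,\mathsf{U}_{[0,n-1-i]}\,\varphi\big)\Big),$$ $$\psi\,\mathsf{R}_{[m,n)}\,\varphi\equiv\psi\vee\Big(\bigwedge_{i=1}^{m}\widehat{\circ}_{[i,i]}\big(\psi\,\mathsf{R}_{[m-i,n-i)}\,\varphi\big)\wedge\bigwedge_{i=m+1}^{n-1}\widehat{\circ}_{[i,i]}\big(\psi\,\mathsf{R}_{[0,n-1-i]}\,\varphi\big)\Big),$$ and the same holds for the dual past operators, i.e. the equivalences obtained by replacing $\mathsf{U},\mathsf{R},\circ,\widehat{\circ}$ by $\mathsf{S},\mathsf{T},\bullet,\widehat{\bullet}$ respectively.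
   Context: Write $[m,n)=\{i\in\mathbb{N}\mid m\le i<n\}$, $[m,n]=\{i\in\mathbb{N}\mid m\le i\le n\}$, $(m,n]=\{i\in\mathbb{N}\mid m<i\le n\}$. Metric formulas over a set of atoms $\mathcal{A}$: $\varphi::=p\mid\bot\mid\varphi_1\wedge\varphi_2\mid\varphi_1\vee\varphi_2\mid\varphi_1\to\varphi_2\mid\bullet_I\varphi\mid\varphi_1\mathsf{S}_I\varphi_2\mid\varphi_1\mathsf{T}_I\varphi_2\mid\circ_I\varphi\mid\varphi_1\mathsf{U}_I\varphi_2\mid\varphi_1\mathsf{R}_I\varphi_2$, $p\in\mathcal{A}$, $I=[m,n)$, $m\in\mathbb{N}$, $n\in\mathbb{N}\cup\{\omega\}$; a subscript $[m,n]$ with $n\in\mathbb{N}$ abbreviates $[m,n+1)$. Derived: $\neg\varphi:=\varphi\to\bot$, $\top:=\neg\bot$, $\widehat{\bullet}_I\varphi:=\bullet_I\varphi\vee\neg\bullet_I\top$, $\widehat{\circ}_I\varphi:=\circ_I\varphi\vee\neg\circ_I\top$. A timed HT-trace of length $\lambda\in\mathbb{N}\cup\{\omega\}$ is $\mathbf{M}=(\langle\mathbf{H},\mathbf{T}\rangle,\tau)$ with $H_i\subseteq T_i\subseteq\mathcal{A}$ for $i\in[0,\lambda)$, $\tau:[0,\lambda)\to\mathbb{N}$, $\tau(0)=0$, $\tau(i)\le\tau(i+1)$; it is strict if $\tau(i)<\tau(i+1)$ whenever $i+1<\lambda$. Satisfaction at $k\in[0,\lambda)$: $\bot$ never; $p$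 iff $p\in H_k$; $\wedge,\vee$ usual; $\varphi\to\psi$ iff for both $\mathbf{M}'=\mathbf{M}$ and $\mathbf{M}'=(\langle\mathbf{T},\mathbf{T}\rangle,\tau)$, $\mathbf{M}',k\not\models\varphi$ or $\mathbf{M}',k\models\psi$; $\bullet_I\varphi$ iff $k>0$, $\mathbf{M},k-1\models\varphi$, $\tau(k)-\tau(k-1)\in I$; $\varphi\mathsf{S}_I\psi$ iff for some $j\in[0,k]$ with $\tau(k)-\tau(j)\in I$, $\mathbf{M},j\models\psi$ and $\mathbf{M},i\models\varphi$ for all $i\in(j,k]$; $\varphi\mathsf{T}_I\psi$ iff for all $j\in[0,k]$ with $\tau(k)-\tau(j)\in I$, $\mathbf{M},j\models\psi$ or $\mathbf{M},i\models\varphi$ for some $i\in(j,k]$; $\circ_I\varphi$ iff $k+1<\lambda$, $\mathbf{M},k+1\models\varphi$, $\tau(k+1)-\tau(k)\in I$; $\varphi\mathsf{U}_I\psi$ iff for some $j\in[k,\lambda)$ with $\tau(j)-\tau(k)\in I$, $\mathbf{M},j\models\psi$ and $\mathbf{M},i\models\varphi$ for all $i\in[k,j)$; $\varphi\mathsf{R}_I\psi$ iff for all $j\in[k,\lambda)$ with $\tau(j)-\tau(k)\in I$, $\mathbf{M},j\models\psi$ or $\mathbf{M},i\models\varphi$ for some $i\in[k,j)$. Here $\alpha\equiv\beta$ (w.r.t. strict traces) means: for every strict timed HT-trace $\mathbf{M}$ of any length $\lambda$ and every $k\in[0,\lambda)$, $\mathbf{M},k\models\alpha$ iff $\mathbf{M},k\models\beta$.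 *)

theory Defs
  imports Main "HOL-Library.Extended_Nat"
begin

(* Interval [m,n) with m :: nat and n :: enat (\<infinity> plays the role of \<omega>) *)
datatype interval = Ivl nat enat

definition in_ivl :: "nat \<Rightarrow> interval \<Rightarrow> bool" where
  "in_ivl d I = (case I of Ivl m n \<Rightarrow> m \<le> d \<and> enat d < n)"

(* [m,n] with n \<in> \<nat> abbreviates [m,n+1) *)
definition cIvl :: "nat \<Rightarrow> nat \<Rightarrow> interval" where
  "cIvl m n = Ivl m (enat (n + 1))"

datatype 'a mform =
    Atom 'a
  | Bot
  | And "'a mform" "'a mform"
  | Or "'a mform" "'a mform"
  | Imp "'a mform" "'a mform"
  | Prev interval "'a mform"
  | Since interval "'a mform" "'a mform"
  | Trigger interval "'a mform" "'a mform"
  | Next interval "'a mform"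
  | Until interval "'a mform" "'a mform"
  | Release interval "'a mform" "'a mform"

definition Neg :: "'a mform \<Rightarrow> 'a mform" where "Neg \<phi> = Imp \<phi> Bot"
definition Top :: "'a mform" where "Top = Neg Bot"
definition WPrev :: "interval \<Rightarrow> 'a mform \<Rightarrow> 'a mform" where
  "WPrev I \<phi> = Or (Prev I \<phi>) (Neg (Prev I Top))"
definition WNext :: "interval \<Rightarrow> 'a mform \<Rightarrow> 'a mform" where
  "WNext I \<phi> = Or (Next I \<phi>) (Neg (Next I Top))"

fun big_or :: "'a mform list \<Rightarrow> 'a mform" where
  "big_or [] = Bot"
| "big_or [x] = x"
| "big_or (x # xs) = Or x (big_or xs)"

fun big_and :: "'a mform list \<Rightarrow> 'a mform" where
  "big_and [] = Top"
| "big_and [x] = x"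
| "big_and (x # xs) = And x (big_and xs)"

(* Satisfaction in the timed HT-trace (<H,T>,\<tau>) of length L at position k *)
fun sat :: "enat \<Rightarrow> (nat \<Rightarrow> 'a set) \<Rightarrow> (nat \<Rightarrow> 'a set) \<Rightarrow> (nat \<Rightarrow> nat) \<Rightarrow> nat \<Rightarrow> 'a mform \<Rightarrow> bool" where
  "sat L H T \<tau> k (Atom p) = (p \<in> H k)"
| "sat L H T \<tau> k Bot = False"
| "sat L H T \<tau> k (And \<phi> \<psi>) = (sat L H T \<tau> k \<phi> \<and> sat L H T \<tau> k \<psi>)"
| "sat L H T \<tau> k (Or \<phi> \<psi>) = (sat L H T \<tau> k \<phi> \<or> sat L H T \<tau> k \<psi>)"
| "sat L H T \<tau> k (Imp \<phi> \<psi>) =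
     ((\<not> sat L H T \<tau> k \<phi> \<or> sat L H T \<tau> k \<psi>) \<and>
      (\<not> sat L T T \<tau> k \<phi> \<or> sat L T T \<tau> k \<psi>))"
| "sat L H T \<tau> k (Prev I \<phi>) =
     (k > 0 \<and> sat L H T \<tau> (k - 1) \<phi> \<and> in_ivl (\<tau> k - \<tau> (k - 1)) I)"
| "sat L H T \<tau> k (Since I \<phi> \<psi>) =
     (\<exists>j\<le>k. in_ivl (\<tau> k - \<tau> j) I \<and> sat L H T \<tau> j \<psi> \<and>
        (\<forall>i. j < i \<and> i \<le> k \<longrightarrow> sat L H T \<tau> i \<phi>))"
| "sat L H T \<tau> k (Trigger I \<phi> \<psi>) =
     (\<forall>j\<le>k. in_ivl (\<tau> k - \<tau> j) I \<longrightarrow> sat L H T \<tau> j \<psi> \<or>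
        (\<exists>i. j < i \<and> i \<le> k \<and> sat L H T \<tau> i \<phi>))"
| "sat L H T \<tau> k (Next I \<phi>) =
     (enat (k + 1) < L \<and> sat L H T \<tau> (k + 1) \<phi> \<and> in_ivl (\<tau> (k + 1) - \<tau> k) I)"
| "sat L H T \<tau> k (Until I \<phi> \<psi>) =
     (\<exists>j. k \<le> j \<and> enat j < L \<and> in_ivl (\<tau> j - \<tau> k) I \<and> sat L H T \<tau> j \<psi> \<and>
        (\<forall>i. k \<le> i \<and> i < j \<longrightarrow> sat L H T \<tau> i \<phi>))"
| "sat L H T \<tau> k (Release I \<phi> \<psi>) =
     (\<forall>j. k \<le> j \<and> enat j < L \<and> in_ivl (\<tau> j - \<tau> k) I \<longrightarrow> sat L H T \<tau> j \<psi> \<or>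
        (\<exists>i. k \<le> i \<and> i < j \<and> sat L H T \<tau> i \<phi>))"

definition strict_trace :: "enat \<Rightarrow> (nat \<Rightarrow> 'a set) \<Rightarrow> (nat \<Rightarrow> 'a set) \<Rightarrow> (nat \<Rightarrow> nat) \<Rightarrow> bool" where
  "strict_trace L H T \<tau> =
     ((\<forall>i. enat i < L \<longrightarrow> H i \<subseteq> T i) \<and> \<tau> 0 = 0 \<and>
      (\<forall>i. enat (i + 1) < L \<longrightarrow> \<tau> i < \<tau> (i + 1)))"

definition equiv_strict :: "'a mform \<Rightarrow> 'a mform \<Rightarrow> bool" where
  "equiv_strict \<alpha> \<beta> =
     (\<forall>L H T \<tau> k. strict_trace L H T \<tau> \<longrightarrow> enat k < L \<longrightarrow>
        (sat L H T \<tau> k \<alpha> \<longleftrightarrow> sat L H T \<tau> k \<beta>))"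

end

theory Submission
  imports Defs
begin


lemma sat_big_or: "sat L H T \<tau> k (big_or xs) = (\<exists>x\<in>set xs. sat L H T \<tau> k x)"
  by (induction xs rule: big_or.induct) auto

lemma sat_big_or_map: "sat L H T \<tau> k (big_or (map f xs)) = (\<exists>i\<in>set xs. sat L H T \<tau> k (f i))"
  by (simp add: sat_big_or)

lemma sat_Top[simp]: "sat L H T \<tau> k Top"
  by (simp add: Top_def Neg_def)

lemma sat_big_and: "sat L H T \<tau> k (big_and xs) = (\<forall>x\<in>set xs. sat L H T \<tau> k x)"
  by (induction xs rule: big_and.induct) auto

lemma sat_big_and_map: "sat L H T \<tau> k (big_and (map f xs)) = (\<forall>i\<in>set xs. sat L H T \<tau> k (f i))"
  by (simp add: sat_big_and)

lemma sat_WNext: "sat L H T \<tau> k (WNext I \<phi>) = (enat (k+1) < L \<and> in_ivl (\<tau> (k+1) - \<tau> k) I \<longrightarrow> sat L H T \<tau> (k+1) \<phi>)"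
  by (auto simp: WNext_def Neg_def)

lemma sat_WPrev: "sat L H T \<tau> k (WPrev I \<phi>) = (k > 0 \<and> in_ivl (\<tau> k - \<tau> (k-1)) I \<longrightarrow> sat L H T \<tau> (k-1) \<phi>)"
  by (auto simp: WPrev_def Neg_def)

lemma in_cIvl[simp]: "in_ivl d (cIvl i i) = (d = i)"
  by (auto simp: in_ivl_def cIvl_def)

lemma in_Ivl[simp]: "in_ivl d (Ivl a (enat b)) = (a \<le> d \<and> d < b)"
  by (auto simp: in_ivl_def)

lemma in_cIvl0[simp]: "in_ivl d (cIvl 0 b) = (d \<le> b)"
  by (auto simp: in_ivl_def cIvl_def)

lemma mono_strict: "strict_trace L H T \<tau> \<Longrightarrow> i < j \<Longrightarrow> enat j < L \<Longrightarrow> \<tau> i < \<tau> j"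
proof (induction j)
  case 0 then show ?case by simp
next
  case (Suc j)
  have jL: "enat j < L" using Suc.prems(3) by (meson Suc_n_not_le_n enat_ord_simps(1) le_less_trans nat_le_linear)
  have "\<tau> j < \<tau> (Suc j)" using Suc.prems(1,3) by (simp add: strict_trace_def)
  then show ?case using Suc jL by (metis less_Suc_eq order.strict_trans)
qed

lemma mono_strict_le: "strict_trace L H T \<tau> \<Longrightarrow> i \<le> j \<Longrightarrow> enat j < L \<Longrightarrow> \<tau> i \<le> \<tau> j"
  using mono_strict[of L H T \<tau> i j] by (cases "i = j") auto


lemma mono_le_k: "strict_trace L H T \<tau> \<Longrightarrow> i \<le> j \<Longrightarrow> j \<le> k \<Longrightarrow> enat k < L \<Longrightarrow> \<tau> i \<le> \<tau> j"
  by (metis enat_ord_simps(1) le_less_trans mono_strict_le)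

lemma mono_lt_k: "strict_trace L H T \<tau> \<Longrightarrow> i < j \<Longrightarrow> j \<le> k \<Longrightarrow> enat k < L \<Longrightarrow> \<tau> i < \<tau> j"
  by (metis enat_ord_simps(1) le_less_trans mono_strict)

lemma until_part:
  assumes m0: "0 < m" and mn: "m < n - 1" and st: "strict_trace L H T \<tau>" and kL: "enat k < L"
  shows "sat L H T \<tau> k (Until (Ivl m (enat n)) \<psi> \<phi>) =
    sat L H T \<tau> k (And \<psi> (Or
        (big_or (map (\<lambda>i. Next (cIvl i i) (Until (Ivl (m - i) (enat (n - i))) \<psi> \<phi>)) [1..<m+1]))
        (big_or (map (\<lambda>i. Next (cIvl i i) (Until (cIvl 0 (n - 1 - i)) \<psi> \<phi>)) [m+1..<n]))))"
  (is "?L = ?R")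
proof
  assume ?L
  then obtain j where j: "k \<le> j" "enat j < L" "m \<le> \<tau> j - \<tau> k" "\<tau> j - \<tau> k < n" "sat L H T \<tau> j \<phi>"
    "\<forall>i. k \<le> i \<and> i < j \<longrightarrow> sat L H T \<tau> i \<psi>" by auto
  have kj: "k < j" using j m0 by (cases "k = j") auto
  have k1L: "enat (k+1) < L" using kj j(2) by (metis Suc_eq_plus1 Suc_leI enat_ord_simps(1) le_less_trans)
  define d where "d = \<tau> (k+1) - \<tau> k"
  have t1: "\<tau> k < \<tau> (k+1)" using mono_strict[OF st _ k1L] by simp
  have t2: "\<tau> (k+1) \<le> \<tau> j" using mono_strict_le[OF st _ j(2)] kj by simp
  have d1: "1 \<le> d" using t1 d_def by simp
  have dn: "d < n" using t2 j(4) d_def by simp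
  have psik: "sat L H T \<tau> k \<psi>" using j(6) kj by simp
  have rest: "\<forall>i. k+1 \<le> i \<and> i < j \<longrightarrow> sat L H T \<tau> i \<psi>" using j(6) by simp
  show ?R
  proof (cases "d \<le> m")
    case True
    have "sat L H T \<tau> k (Next (cIvl d d) (Until (Ivl (m - d) (enat (n - d))) \<psi> \<phi>))"
      using k1L d_def j t2 t1 rest kj True by (auto intro!: exI[of _ j])
    moreover have "d \<in> set [1..<m+1]" using d1 True by auto
    ultimately show ?R using psik by (auto simp: sat_big_or)
  next
    case False
    have "sat L H T \<tau> k (Next (cIvl d d) (Until (cIvl 0 (n - 1 - d)) \<psi> \<phi>))"
      using k1L d_def j t2 t1 rest kj False by (auto intro!: exI[of _ j])
    moreover have "d \<in> set [m+1..<n]" using dn False by simp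
    ultimately show ?R using psik by (auto simp: sat_big_or)
  qed
next
  assume R: ?R
  have psik: "sat L H T \<tau> k \<psi>" using R by simp
  have t1: "enat (k+1) < L \<Longrightarrow> \<tau> k \<le> \<tau> (k+1)" using mono_strict_le[OF st] by simp
  from R consider
    (a) i where "1 \<le> i" "i \<le> m" "sat L H T \<tau> k (Next (cIvl i i) (Until (Ivl (m - i) (enat (n - i))) \<psi> \<phi>))"
  | (b) i where "m < i" "i < n" "sat L H T \<tau> k (Next (cIvl i i) (Until (cIvl 0 (n - 1 - i)) \<psi> \<phi>))"
    using R unfolding sat.simps(3,4) sat_big_or_map set_upt by (auto simp del: sat.simps simp: Suc_le_eq)
  then show ?L
  proof cases
    case a
    then obtain j where j: "k+1 \<le> j" "enat j < L" "m - i \<le> \<tau> j - \<tau> (k+1)" "\<tau> j - \<tau> (k+1) < n - i"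
      "sat L H T \<tau> j \<phi>" "\<forall>l. k+1 \<le> l \<and> l < j \<longrightarrow> sat L H T \<tau> l \<psi>" "\<tau> (k+1) - \<tau> k = i" "enat (k+1) < L"
      by auto
    have "\<tau> (k+1) \<le> \<tau> j" using mono_strict_le[OF st j(1) j(2)] .
    moreover have "\<tau> k \<le> \<tau> (k+1)" using t1 j(8) .
    ultimately have "m \<le> \<tau> j - \<tau> k" "\<tau> j - \<tau> k < n" using j a by auto
    moreover have "\<forall>l. k \<le> l \<and> l < j \<longrightarrow> sat L H T \<tau> l \<psi>" using j(6) psik
      by (metis Suc_eq_plus1 Suc_leI le_neq_implies_less)
    ultimately show ?L using j by (auto intro!: exI[of _ j])
  next
    case b
    then obtain j where j: "k+1 \<le> j" "enat j < L" "\<tau> j - \<tau> (k+1) \<le> n - 1 - i"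
      "sat L H T \<tau> j \<phi>" "\<forall>l. k+1 \<le> l \<and> l < j \<longrightarrow> sat L H T \<tau> l \<psi>" "\<tau> (k+1) - \<tau> k = i" "enat (k+1) < L"
      by auto
    have "\<tau> (k+1) \<le> \<tau> j" using mono_strict_le[OF st j(1) j(2)] .
    moreover have "\<tau> k \<le> \<tau> (k+1)" using t1 j(7) .
    ultimately have "m \<le> \<tau> j - \<tau> k" "\<tau> j - \<tau> k < n" using j b by auto
    moreover have "\<forall>l. k \<le> l \<and> l < j \<longrightarrow> sat L H T \<tau> l \<psi>" using j(5) psik
      by (metis Suc_eq_plus1 Suc_leI le_neq_implies_less)
    ultimately show ?L using j by (auto intro!: exI[of _ j])
  qed
qed


lemma release_part:
  assumes m0: "0 < m" and mn: "m < n - 1" and st: "strict_trace L H T \<tau>" and kL: "enat k < L"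
  shows "sat L H T \<tau> k (Release (Ivl m (enat n)) \<psi> \<phi>) =
    sat L H T \<tau> k (Or \<psi> (And
        (big_and (map (\<lambda>i. WNext (cIvl i i) (Release (Ivl (m - i) (enat (n - i))) \<psi> \<phi>)) [1..<m+1]))
        (big_and (map (\<lambda>i. WNext (cIvl i i) (Release (cIvl 0 (n - 1 - i)) \<psi> \<phi>)) [m+1..<n]))))"
  (is "?L = ?R")
proof
  assume L: ?L
  show ?R
  proof (cases "sat L H T \<tau> k \<psi>")
    case True then show ?thesis by simp
  next
    case npsi: False
    have key: "sat L H T \<tau> j \<phi> \<or> (\<exists>l. k+1 \<le> l \<and> l < j \<and> sat L H T \<tau> l \<psi>)"
      if "k+1 \<le> j" "enat j < L" "m \<le> \<tau> j - \<tau> k" "\<tau> j - \<tau> k < n" for j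
    proof -
      from L that have "sat L H T \<tau> j \<phi> \<or> (\<exists>l. k \<le> l \<and> l < j \<and> sat L H T \<tau> l \<psi>)" by auto
      then show ?thesis using npsi by (metis Suc_eq_plus1 Suc_leI le_neq_implies_less)
    qed
    have A: "\<forall>i\<in>set [1..<m+1]. sat L H T \<tau> k (WNext (cIvl i i) (Release (Ivl (m - i) (enat (n - i))) \<psi> \<phi>))"
    proof
      fix i assume i: "i \<in> set [1..<m+1]"
      show "sat L H T \<tau> k (WNext (cIvl i i) (Release (Ivl (m - i) (enat (n - i))) \<psi> \<phi>))"
        unfolding sat_WNext
      proof (intro impI)
        assume h: "enat (k + 1) < L \<and> in_ivl (\<tau> (k + 1) - \<tau> k) (cIvl i i)"
        have t1: "\<tau> k \<le> \<tau> (k+1)" using mono_strict_le[OF st _ conjunct1[OF h]] by simp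
        show "sat L H T \<tau> (k + 1) (Release (Ivl (m - i) (enat (n - i))) \<psi> \<phi>)"
        proof (simp only: sat.simps, intro allI impI)
          fix j assume j: "k + 1 \<le> j \<and> enat j < L \<and> in_ivl (\<tau> j - \<tau> (k + 1)) (Ivl (m - i) (enat (n - i)))"
          have t2: "\<tau> (k+1) \<le> \<tau> j" using mono_strict_le[OF st] j by blast
          have "m \<le> \<tau> j - \<tau> k" "\<tau> j - \<tau> k < n" using j h i t1 t2 by auto
          then show "sat L H T \<tau> j \<phi> \<or> (\<exists>l. k + 1 \<le> l \<and> l < j \<and> sat L H T \<tau> l \<psi>)"
            using key j by blast
        qed
      qed
    qed
    have B: "\<forall>i\<in>set [m+1..<n]. sat L H T \<tau> k (WNext (cIvl i i) (Release (cIvl 0 (n - 1 - i)) \<psi> \<phi>))"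
    proof
      fix i assume i: "i \<in> set [m+1..<n]"
      show "sat L H T \<tau> k (WNext (cIvl i i) (Release (cIvl 0 (n - 1 - i)) \<psi> \<phi>))"
        unfolding sat_WNext
      proof (intro impI)
        assume h: "enat (k + 1) < L \<and> in_ivl (\<tau> (k + 1) - \<tau> k) (cIvl i i)"
        have t1: "\<tau> k \<le> \<tau> (k+1)" using mono_strict_le[OF st _ conjunct1[OF h]] by simp
        show "sat L H T \<tau> (k + 1) (Release (cIvl 0 (n - 1 - i)) \<psi> \<phi>)"
        proof (simp only: sat.simps, intro allI impI)
          fix j assume j: "k + 1 \<le> j \<and> enat j < L \<and> in_ivl (\<tau> j - \<tau> (k + 1)) (cIvl 0 (n - 1 - i))"
          have t2: "\<tau> (k+1) \<le> \<tau> j" using mono_strict_le[OF st] j by blast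
          have "m \<le> \<tau> j - \<tau> k" "\<tau> j - \<tau> k < n" using j h i t1 t2 by auto
          then show "sat L H T \<tau> j \<phi> \<or> (\<exists>l. k + 1 \<le> l \<and> l < j \<and> sat L H T \<tau> l \<psi>)"
            using key j by blast
        qed
      qed
    qed
    show ?thesis using A B unfolding sat.simps(3,4) sat_big_and_map by blast
  qed
next
  assume R: ?R
  show ?L
  proof (cases "sat L H T \<tau> k \<psi>")
    case True
    show ?thesis
    proof (simp only: sat.simps, intro allI impI)
      fix j assume j: "k \<le> j \<and> enat j < L \<and> in_ivl (\<tau> j - \<tau> k) (Ivl m (enat n))"
      have "j \<noteq> k" using j m0 by auto
      then show "sat L H T \<tau> j \<phi> \<or> (\<exists>i. k \<le> i \<and> i < j \<and> sat L H T \<tau> i \<psi>)"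
        using True j by auto
    qed
  next
    case False
    with R have A: "\<forall>i\<in>set [1..<m+1]. sat L H T \<tau> k (WNext (cIvl i i) (Release (Ivl (m - i) (enat (n - i))) \<psi> \<phi>))"
      and B: "\<forall>i\<in>set [m+1..<n]. sat L H T \<tau> k (WNext (cIvl i i) (Release (cIvl 0 (n - 1 - i)) \<psi> \<phi>))"
      unfolding sat.simps(3,4) sat_big_and_map by blast+
    show ?thesis
    proof (simp only: sat.simps, intro allI impI)
      fix j assume j: "k \<le> j \<and> enat j < L \<and> in_ivl (\<tau> j - \<tau> k) (Ivl m (enat n))"
      have kj: "k < j" using j m0 by (cases "k = j") auto
      have k1L: "enat (k+1) < L" using kj j by (metis Suc_eq_plus1 Suc_leI enat_ord_simps(1) le_less_trans)
      define d where "d = \<tau> (k+1) - \<tau> k"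
      have t1: "\<tau> k < \<tau> (k+1)" using mono_strict[OF st _ k1L] by simp
      have t2: "\<tau> (k+1) \<le> \<tau> j" using mono_strict_le[OF st _ ] kj j by simp
      have d1: "1 \<le> d" using t1 d_def by simp
      have dn: "d < n" using t1 t2 j d_def by auto
      have "sat L H T \<tau> j \<phi> \<or> (\<exists>l. k + 1 \<le> l \<and> l < j \<and> sat L H T \<tau> l \<psi>)"
      proof (cases "d \<le> m")
        case True
        then have "d \<in> set [1..<m+1]" using d1 by auto
        with A have "sat L H T \<tau> k (WNext (cIvl d d) (Release (Ivl (m - d) (enat (n - d))) \<psi> \<phi>))" by blast
        then have "sat L H T \<tau> (k+1) (Release (Ivl (m - d) (enat (n - d))) \<psi> \<phi>)"
          unfolding sat_WNext using k1L d_def by simp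
        moreover have "k + 1 \<le> j \<and> enat j < L \<and> in_ivl (\<tau> j - \<tau> (k + 1)) (Ivl (m - d) (enat (n - d)))"
          using kj j t1 t2 d_def True by auto
        ultimately show ?thesis by (simp only: sat.simps; blast)
      next
        case False
        then have "d \<in> set [m+1..<n]" using dn by auto
        with B have "sat L H T \<tau> k (WNext (cIvl d d) (Release (cIvl 0 (n - 1 - d)) \<psi> \<phi>))" by blast
        then have "sat L H T \<tau> (k+1) (Release (cIvl 0 (n - 1 - d)) \<psi> \<phi>)"
          unfolding sat_WNext using k1L d_def by simp
        moreover have "k + 1 \<le> j \<and> enat j < L \<and> in_ivl (\<tau> j - \<tau> (k + 1)) (cIvl 0 (n - 1 - d))"
          using kj j t1 t2 d_def False by auto
        ultimately show ?thesis by (simp only: sat.simps; blast)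
      qed
      then show "sat L H T \<tau> j \<phi> \<or> (\<exists>i. k \<le> i \<and> i < j \<and> sat L H T \<tau> i \<psi>)" by auto
    qed
  qed
qed


lemma since_part:
  assumes m0: "0 < m" and mn: "m < n - 1" and st: "strict_trace L H T \<tau>" and kL: "enat k < L"
  shows "sat L H T \<tau> k (Since (Ivl m (enat n)) \<psi> \<phi>) =
    sat L H T \<tau> k (And \<psi> (Or
        (big_or (map (\<lambda>i. Prev (cIvl i i) (Since (Ivl (m - i) (enat (n - i))) \<psi> \<phi>)) [1..<m+1]))
        (big_or (map (\<lambda>i. Prev (cIvl i i) (Since (cIvl 0 (n - 1 - i)) \<psi> \<phi>)) [m+1..<n]))))"
  (is "?L = ?R")
proof
  assume ?L
  then obtain j where j: "j \<le> k" "m \<le> \<tau> k - \<tau> j" "\<tau> k - \<tau> j < n" "sat L H T \<tau> j \<phi>"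
    "\<forall>i. j < i \<and> i \<le> k \<longrightarrow> sat L H T \<tau> i \<psi>" by auto
  have kj: "j < k" using j m0 by (cases "k = j") auto
  define d where "d = \<tau> k - \<tau> (k-1)"
  have t1: "\<tau> (k-1) < \<tau> k" using mono_lt_k[OF st _ _ kL] kj by simp
  have t2: "\<tau> j \<le> \<tau> (k-1)" using mono_le_k[OF st _ _ kL] kj by simp
  have d1: "1 \<le> d" using t1 d_def by simp
  have dn: "d < n" using t1 t2 j(3) d_def by auto
  have psik: "sat L H T \<tau> k \<psi>" using j(5) kj by simp
  have rest: "\<forall>i. j < i \<and> i \<le> k - 1 \<longrightarrow> sat L H T \<tau> i \<psi>" using j(5) by auto
  have k0: "k > 0" using kj by simp
  have jk1: "j \<le> k - 1" using kj by simp
  show ?R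
  proof (cases "d \<le> m")
    case True
    have ar: "m - d \<le> \<tau> (k-1) - \<tau> j" "\<tau> (k-1) - \<tau> j < n - d" using d_def t1 t2 j(2,3) by arith+
    have "sat L H T \<tau> k (Prev (cIvl d d) (Since (Ivl (m - d) (enat (n - d))) \<psi> \<phi>))"
      using k0 d_def j rest jk1 True ar by (auto intro!: exI[of _ j])
    moreover have "d \<in> set [1..<m+1]" using d1 True by auto
    ultimately show ?R using psik by (auto simp: sat_big_or)
  next
    case False
    have ar: "\<tau> (k-1) - \<tau> j \<le> n - 1 - d" using d_def t1 t2 j(2,3) by arith
    have "sat L H T \<tau> k (Prev (cIvl d d) (Since (cIvl 0 (n - 1 - d)) \<psi> \<phi>))"
      using k0 d_def j rest jk1 ar by (auto intro!: exI[of _ j])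
    moreover have "d \<in> set [m+1..<n]" using dn False by simp
    ultimately show ?R using psik by (auto simp: sat_big_or)
  qed
next
  assume R: ?R
  have psik: "sat L H T \<tau> k \<psi>" using R by simp
  from R consider
    (a) i where "1 \<le> i" "i \<le> m" "sat L H T \<tau> k (Prev (cIvl i i) (Since (Ivl (m - i) (enat (n - i))) \<psi> \<phi>))"
  | (b) i where "m < i" "i < n" "sat L H T \<tau> k (Prev (cIvl i i) (Since (cIvl 0 (n - 1 - i)) \<psi> \<phi>))"
    using R unfolding sat.simps(3,4) sat_big_or_map set_upt by (auto simp del: sat.simps simp: Suc_le_eq)
  then show ?L
  proof cases
    case a
    then obtain j where j: "j \<le> k - 1" "m - i \<le> \<tau> (k-1) - \<tau> j" "\<tau> (k-1) - \<tau> j < n - i"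
      "sat L H T \<tau> j \<phi>" "\<forall>l. j < l \<and> l \<le> k - 1 \<longrightarrow> sat L H T \<tau> l \<psi>" "\<tau> k - \<tau> (k-1) = i" "k > 0"
      by auto
    have u1: "\<tau> j \<le> \<tau> (k-1)" using mono_le_k[OF st j(1) _ kL] by simp
    have u2: "\<tau> (k-1) \<le> \<tau> k" using mono_le_k[OF st _ _ kL] by simp
    have "m \<le> \<tau> k - \<tau> j" "\<tau> k - \<tau> j < n" using j(2,3,6) a(1,2) u1 u2 by arith+
    moreover have "\<forall>l. j < l \<and> l \<le> k \<longrightarrow> sat L H T \<tau> l \<psi>" using j(5) psik
      by (metis Suc_pred' j(7) le_SucE)
    moreover have "j \<le> k" using j(1) by simp
    ultimately show ?L using j by (auto intro!: exI[of _ j])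
  next
    case b
    then obtain j where j: "j \<le> k - 1" "\<tau> (k-1) - \<tau> j \<le> n - 1 - i"
      "sat L H T \<tau> j \<phi>" "\<forall>l. j < l \<and> l \<le> k - 1 \<longrightarrow> sat L H T \<tau> l \<psi>" "\<tau> k - \<tau> (k-1) = i" "k > 0"
      by auto
    have u1: "\<tau> j \<le> \<tau> (k-1)" using mono_le_k[OF st j(1) _ kL] by simp
    have u2: "\<tau> (k-1) \<le> \<tau> k" using mono_le_k[OF st _ _ kL] by simp
    have "m \<le> \<tau> k - \<tau> j" "\<tau> k - \<tau> j < n" using j(2,5) b(1,2) u1 u2 by arith+
    moreover have "\<forall>l. j < l \<and> l \<le> k \<longrightarrow> sat L H T \<tau> l \<psi>" using j(4) psik
      by (metis Suc_pred' j(6) le_SucE)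
    moreover have "j \<le> k" using j(1) by simp
    ultimately show ?L using j by (auto intro!: exI[of _ j])
  qed
qed


lemma trigger_part:
  assumes m0: "0 < m" and mn: "m < n - 1" and st: "strict_trace L H T \<tau>" and kL: "enat k < L"
  shows "sat L H T \<tau> k (Trigger (Ivl m (enat n)) \<psi> \<phi>) =
    sat L H T \<tau> k (Or \<psi> (And
        (big_and (map (\<lambda>i. WPrev (cIvl i i) (Trigger (Ivl (m - i) (enat (n - i))) \<psi> \<phi>)) [1..<m+1]))
        (big_and (map (\<lambda>i. WPrev (cIvl i i) (Trigger (cIvl 0 (n - 1 - i)) \<psi> \<phi>)) [m+1..<n]))))"
  (is "?L = ?R")
proof
  assume L: ?L
  show ?R
  proof (cases "sat L H T \<tau> k \<psi>")
    case True then show ?thesis by simp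
  next
    case npsi: False
    have key: "sat L H T \<tau> j \<phi> \<or> (\<exists>l. j < l \<and> l \<le> k - 1 \<and> sat L H T \<tau> l \<psi>)"
      if "j \<le> k - 1" "k > 0" "m \<le> \<tau> k - \<tau> j" "\<tau> k - \<tau> j < n" for j
    proof -
      from L that have "sat L H T \<tau> j \<phi> \<or> (\<exists>l. j < l \<and> l \<le> k \<and> sat L H T \<tau> l \<psi>)" by auto
      then show ?thesis using npsi by (metis Suc_pred' le_SucE that(2))
    qed
    have A: "\<forall>i\<in>set [1..<m+1]. sat L H T \<tau> k (WPrev (cIvl i i) (Trigger (Ivl (m - i) (enat (n - i))) \<psi> \<phi>))"
    proof
      fix i assume i: "i \<in> set [1..<m+1]"
      show "sat L H T \<tau> k (WPrev (cIvl i i) (Trigger (Ivl (m - i) (enat (n - i))) \<psi> \<phi>))"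
        unfolding sat_WPrev
      proof (intro impI)
        assume h: "k > 0 \<and> in_ivl (\<tau> k - \<tau> (k - 1)) (cIvl i i)"
        have t1: "\<tau> (k-1) \<le> \<tau> k" using mono_le_k[OF st _ _ kL] by simp
        show "sat L H T \<tau> (k - 1) (Trigger (Ivl (m - i) (enat (n - i))) \<psi> \<phi>)"
        proof (simp only: sat.simps, intro allI impI)
          fix j assume j0: "j \<le> k - 1" and j1: "in_ivl (\<tau> (k - 1) - \<tau> j) (Ivl (m - i) (enat (n - i)))"
          note j = j0 j1
          have t2: "\<tau> j \<le> \<tau> (k - 1)" using mono_le_k[OF st _ _ kL] j by simp
          have f: "\<tau> k - \<tau> (k - 1) = i" "m - i \<le> \<tau> (k-1) - \<tau> j" "\<tau> (k-1) - \<tau> j < n - i" "1 \<le> i" "i \<le> m"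
            using j h i by auto
          have "m \<le> \<tau> k - \<tau> j" "\<tau> k - \<tau> j < n" using f t1 t2 by arith+
          then show "sat L H T \<tau> j \<phi> \<or> (\<exists>l. j < l \<and> l \<le> k - 1 \<and> sat L H T \<tau> l \<psi>)"
            using key j h by blast
        qed
      qed
    qed
    have B: "\<forall>i\<in>set [m+1..<n]. sat L H T \<tau> k (WPrev (cIvl i i) (Trigger (cIvl 0 (n - 1 - i)) \<psi> \<phi>))"
    proof
      fix i assume i: "i \<in> set [m+1..<n]"
      show "sat L H T \<tau> k (WPrev (cIvl i i) (Trigger (cIvl 0 (n - 1 - i)) \<psi> \<phi>))"
        unfolding sat_WPrev
      proof (intro impI)
        assume h: "k > 0 \<and> in_ivl (\<tau> k - \<tau> (k - 1)) (cIvl i i)"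
        have t1: "\<tau> (k-1) \<le> \<tau> k" using mono_le_k[OF st _ _ kL] by simp
        show "sat L H T \<tau> (k - 1) (Trigger (cIvl 0 (n - 1 - i)) \<psi> \<phi>)"
        proof (simp only: sat.simps, intro allI impI)
          fix j assume j0: "j \<le> k - 1" and j1: "in_ivl (\<tau> (k - 1) - \<tau> j) (cIvl 0 (n - 1 - i))"
          note j = j0 j1
          have t2: "\<tau> j \<le> \<tau> (k - 1)" using mono_le_k[OF st _ _ kL] j by simp
          have f: "\<tau> k - \<tau> (k - 1) = i" "\<tau> (k-1) - \<tau> j \<le> n - 1 - i" "m < i" "i < n"
            using j h i by auto
          have "m \<le> \<tau> k - \<tau> j" "\<tau> k - \<tau> j < n" using f t1 t2 by arith+
          then show "sat L H T \<tau> j \<phi> \<or> (\<exists>l. j < l \<and> l \<le> k - 1 \<and> sat L H T \<tau> l \<psi>)"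
            using key j h by blast
        qed
      qed
    qed
    show ?thesis using A B unfolding sat.simps(3,4) sat_big_and_map by blast
  qed
next
  assume R: ?R
  show ?L
  proof (cases "sat L H T \<tau> k \<psi>")
    case True
    show ?thesis
    proof (simp only: sat.simps, intro allI impI)
      fix j assume j0: "j \<le> k" and j1: "in_ivl (\<tau> k - \<tau> j) (Ivl m (enat n))"
          note j = j0 j1
      have "j \<noteq> k" using j m0 by auto
      then show "sat L H T \<tau> j \<phi> \<or> (\<exists>i. j < i \<and> i \<le> k \<and> sat L H T \<tau> i \<psi>)"
        using True j by auto
    qed
  next
    case False
    with R have A: "\<forall>i\<in>set [1..<m+1]. sat L H T \<tau> k (WPrev (cIvl i i) (Trigger (Ivl (m - i) (enat (n - i))) \<psi> \<phi>))"
      and B: "\<forall>i\<in>set [m+1..<n]. sat L H T \<tau> k (WPrev (cIvl i i) (Trigger (cIvl 0 (n - 1 - i)) \<psi> \<phi>))"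
      unfolding sat.simps(3,4) sat_big_and_map by blast+
    show ?thesis
    proof (simp only: sat.simps, intro allI impI)
      fix j assume j0: "j \<le> k" and j1: "in_ivl (\<tau> k - \<tau> j) (Ivl m (enat n))"
          note j = j0 j1
      have kj: "j < k" using j m0 by (cases "k = j") auto
      have k0: "k > 0" using kj by simp
      have jk1: "j \<le> k - 1" using kj by simp
      define d where "d = \<tau> k - \<tau> (k-1)"
      have t1: "\<tau> (k-1) < \<tau> k" using mono_lt_k[OF st _ _ kL] kj by simp
      have t2: "\<tau> j \<le> \<tau> (k-1)" using mono_le_k[OF st _ _ kL] kj by simp
      have d1: "1 \<le> d" using t1 d_def by simp
      have jm: "m \<le> \<tau> k - \<tau> j" "\<tau> k - \<tau> j < n" using j by auto
      have dn: "d < n" using t1 t2 jm d_def by arith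
      have "sat L H T \<tau> j \<phi> \<or> (\<exists>l. j < l \<and> l \<le> k - 1 \<and> sat L H T \<tau> l \<psi>)"
      proof (cases "d \<le> m")
        case True
        then have "d \<in> set [1..<m+1]" using d1 by auto
        with A have "sat L H T \<tau> k (WPrev (cIvl d d) (Trigger (Ivl (m - d) (enat (n - d))) \<psi> \<phi>))" by blast
        then have "sat L H T \<tau> (k-1) (Trigger (Ivl (m - d) (enat (n - d))) \<psi> \<phi>)"
          unfolding sat_WPrev using k0 d_def by simp
        moreover have ar: "m - d \<le> \<tau> (k-1) - \<tau> j" "\<tau> (k-1) - \<tau> j < n - d" using d_def t1 t2 jm by arith+
        ultimately show ?thesis using jk1 by (simp only: sat.simps in_Ivl; blast)
      next
        case False
        then have "d \<in> set [m+1..<n]" using dn by auto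
        with B have "sat L H T \<tau> k (WPrev (cIvl d d) (Trigger (cIvl 0 (n - 1 - d)) \<psi> \<phi>))" by blast
        then have "sat L H T \<tau> (k-1) (Trigger (cIvl 0 (n - 1 - d)) \<psi> \<phi>)"
          unfolding sat_WPrev using k0 d_def by simp
        moreover have ar: "\<tau> (k-1) - \<tau> j \<le> n - 1 - d" using d_def t1 t2 jm by arith
        ultimately show ?thesis using jk1 by (simp only: sat.simps in_cIvl0; blast)
      qed
      then show "sat L H T \<tau> j \<phi> \<or> (\<exists>i. j < i \<and> i \<le> k \<and> sat L H T \<tau> i \<psi>)" by auto
    qed
  qed
qed


theorem theorem2:
  fixes \<psi> \<phi> :: "'a mform" and m n :: nat
  assumes "0 < m" and "m < n - 1"
  shows
  "equiv_strict (Until (Ivl m (enat n)) \<psi> \<phi>)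
     (And \<psi> (Or
        (big_or (map (\<lambda>i. Next (cIvl i i) (Until (Ivl (m - i) (enat (n - i))) \<psi> \<phi>)) [1..<m+1]))
        (big_or (map (\<lambda>i. Next (cIvl i i) (Until (cIvl 0 (n - 1 - i)) \<psi> \<phi>)) [m+1..<n]))))
   \<and> equiv_strict (Release (Ivl m (enat n)) \<psi> \<phi>)
     (Or \<psi> (And
        (big_and (map (\<lambda>i. WNext (cIvl i i) (Release (Ivl (m - i) (enat (n - i))) \<psi> \<phi>)) [1..<m+1]))
        (big_and (map (\<lambda>i. WNext (cIvl i i) (Release (cIvl 0 (n - 1 - i)) \<psi> \<phi>)) [m+1..<n]))))
   \<and> equiv_strict (Since (Ivl m (enat n)) \<psi> \<phi>)
     (And \<psi> (Or
        (big_or (map (\<lambda>i. Prev (cIvl i i) (Since (Ivl (m - i) (enat (n - i))) \<psi> \<phi>)) [1..<m+1]))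
        (big_or (map (\<lambda>i. Prev (cIvl i i) (Since (cIvl 0 (n - 1 - i)) \<psi> \<phi>)) [m+1..<n]))))
   \<and> equiv_strict (Trigger (Ivl m (enat n)) \<psi> \<phi>)
     (Or \<psi> (And
        (big_and (map (\<lambda>i. WPrev (cIvl i i) (Trigger (Ivl (m - i) (enat (n - i))) \<psi> \<phi>)) [1..<m+1]))
        (big_and (map (\<lambda>i. WPrev (cIvl i i) (Trigger (cIvl 0 (n - 1 - i)) \<psi> \<phi>)) [m+1..<n]))))"
  unfolding equiv_strict_def
  by (intro conjI allI impI)
    (rule until_part[OF assms] release_part[OF assms] since_part[OF assms] trigger_part[OF assms]; assumption)+

end
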